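(* Let $R\in\{\mathrm{ML},\mathrm{wML},\mathrm{C},\mathrm{S}\}$. Then there is a precise forecasting system $\varphi$ for which every path $\omega\in\Omega$ is $R$-random; moreover, any such precise forecasting system is necessarily non-stationary and non-computable.
   Context: Notation: $\mathbb N=\{1,2,\dots\}$, $\mathbb N_0=\mathbb N\cup\{0\}$. $\Omega=\{0,1\}^{\mathbb N}$ is the set of paths $\omega=(\omega_1,\omega_2,\dots)$; $\omega_{1:n}=(\omega_1,\dots,\omega_n)$, $\omega_{1:0}=\square$. $\mathbb S=\bigcup_{n\in\mathbb N_0}\{0,1\}^n$ is the set of situations, $|s|$ the length, $sx$ concatenation. $\mathscr I$ is the set of closed intervals $I\subseteq[0,1]$. For $r\in[0,1]$, $f:\{0,1\}\to\mathbb R$: $E_r(f)=rf(1)+(1-r)f(0)$; $\overline E_I(f)=\max_{r\in I}E_r(f)$. A forecasting system is a map $\varphi:\mathbb S\to\mathscr I$; $\underline\varphi(s)=\min\varphi(s)$, $\overline\varphi(s)=\max\varphi(s)$; precise if each $\varphi(s)$ is a singleton; stationary if constant. A real process is $F:\mathbb S\to\mathbb R$; $\Delta F(s)$ is $x\mapsto F(sx)-F(s)$. $M$ is a supermartingale for $\varphi$ if $\overline E_{\varphi(s)}(\Delta M(s))\le0$ for all $s$. A test process is a non-negative real process with $F(\square)=1$; a test supermartingale for $\varphi$ is a test process that is a supermartingale for $\varphi$. A multiplier process $D$ assigns to each $s$ a function $D(s):\{0,1\}\to[0,\infty)$ and generates the test process $F(\square)=1$, $F(sx)=F(s)D(s)(x)$.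 Computability: maps from countable effectively encoded domains to $\mathbb N_0$ or $\mathbb Q$ are recursive if Turing-computable; a real map $r$ on a domain $\mathscr D$ is lower semicomputable if $r(d)=\lim_nq(d,n)$ for a recursive rational $q$ non-decreasing in $n$, computable if $|r(d)-q(d,n)|<2^{-n}$ for a recursive rational $q$. A forecasting system is computable if $\underline\varphi,\overline\varphi$ are computable. $\mathscr F_{\mathrm{ML}}$: lower semicomputable test processes; $\mathscr F_{\mathrm{wML}}$: test processes generated by lower semicomputable multiplier processes; $\mathscr F_{\mathrm C}=\mathscr F_{\mathrm S}$: positive rational-valued recursive test processes. $\overline{\mathbb T}_R(\varphi)$: elements of $\mathscr F_R$ that are test supermartingales for $\varphi$. For $R\in\{\mathrm{ML},\mathrm{wML},\mathrm C\}$, $\omega$ is $R$-random for $\varphi$ if no $T\in\overline{\mathbb T}_R(\varphi)$ has $\limsup_nT(\omega_{1:n})=\infty$. A real growth function is a computable, non-decreasing, unbounded $\tau:\mathbb N_0\to[0,\infty)$; $\omega$ is S-random for $\varphi$ if there are no $T\in\overline{\mathbb T}_{\mathrm S}(\varphi)$ and real growth function $\tau$ with $\limsup_n[T(\omega_{1:n})-\tau(n)]\ge0$. *)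

theory Defs
  imports "HOL-Analysis.Analysis" "HOL-Library.Nat_Bijection" "HOL-Library.Liminf_Limsup"
begin

(* The binary alphabet {0,1} is rendered as bool (False = 0, True = 1).
   A situation is a bool list; a path omega = (omega_1, omega_2, ...) is a
   function nat => bool with omega_{k+1} = omega k. *)
type_synonym situation = "bool list"
type_synonym path = "nat \<Rightarrow> bool"

definition prefix :: "path \<Rightarrow> nat \<Rightarrow> situation" where
  "prefix \<omega> n = map \<omega> [0..<n]"

definition closed_unit_intervals :: "real set set" where
  "closed_unit_intervals = {{a..b} | a b. 0 \<le> a \<and> a \<le> b \<and> b \<le> 1}"

definition forecasting_system :: "(situation \<Rightarrow> real set) \<Rightarrow> bool" where
  "forecasting_system \<phi> \<longleftrightarrow> (\<forall>s. \<phi> s \<in> closed_unit_intervals)"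

definition lower_fs :: "(situation \<Rightarrow> real set) \<Rightarrow> situation \<Rightarrow> real" where
  "lower_fs \<phi> s = Inf (\<phi> s)"

definition upper_fs :: "(situation \<Rightarrow> real set) \<Rightarrow> situation \<Rightarrow> real" where
  "upper_fs \<phi> s = Sup (\<phi> s)"

definition precise :: "(situation \<Rightarrow> real set) \<Rightarrow> bool" where
  "precise \<phi> \<longleftrightarrow> (\<forall>s. \<exists>r. \<phi> s = {r})"

definition stationary :: "(situation \<Rightarrow> real set) \<Rightarrow> bool" where
  "stationary \<phi> \<longleftrightarrow> (\<exists>I. \<forall>s. \<phi> s = I)"

definition E :: "real \<Rightarrow> (bool \<Rightarrow> real) \<Rightarrow> real" where
  "E r f = r * f True + (1 - r) * f False"

(* upper expectation: max over r in I (I compact nonempty, so Sup = Max) *)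
definition upperE :: "real set \<Rightarrow> (bool \<Rightarrow> real) \<Rightarrow> real" where
  "upperE I f = Sup ((\<lambda>r. E r f) ` I)"

definition Delta :: "(situation \<Rightarrow> real) \<Rightarrow> situation \<Rightarrow> bool \<Rightarrow> real" where
  "Delta F s = (\<lambda>x. F (s @ [x]) - F s)"

definition supermartingale :: "(situation \<Rightarrow> real set) \<Rightarrow> (situation \<Rightarrow> real) \<Rightarrow> bool" where
  "supermartingale \<phi> M \<longleftrightarrow> (\<forall>s. upperE (\<phi> s) (Delta M s) \<le> 0)"

definition test_process :: "(situation \<Rightarrow> real) \<Rightarrow> bool" where
  "test_process F \<longleftrightarrow> (\<forall>s. 0 \<le> F s) \<and> F [] = 1"

definition test_supermartingale :: "(situation \<Rightarrow> real set) \<Rightarrow> (situation \<Rightarrow> real) \<Rightarrow> bool" where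
  "test_supermartingale \<phi> T \<longleftrightarrow> test_process T \<and> supermartingale \<phi> T"

definition multiplier_process :: "(situation \<Rightarrow> bool \<Rightarrow> real) \<Rightarrow> bool" where
  "multiplier_process D \<longleftrightarrow> (\<forall>s x. 0 \<le> D s x)"

definition generated_by :: "(situation \<Rightarrow> bool \<Rightarrow> real) \<Rightarrow> (situation \<Rightarrow> real) \<Rightarrow> bool" where
  "generated_by D F \<longleftrightarrow> F [] = 1 \<and> (\<forall>s x. F (s @ [x]) = F s * D s x)"

(* Partial recursive functions nat -> nat (Kleene mu-recursion, with pairing
   via the Cantor bijection prod_encode / prod_decode). *)
definition rfind :: "(nat \<Rightarrow> nat option) \<Rightarrow> nat \<Rightarrow> nat option" where
  "rfind f a = (if \<exists>n. f (prod_encode (a, n)) = Some 0 \<and> (\<forall>m<n. f (prod_encode (a, m)) \<noteq> None)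
                then Some (LEAST n. f (prod_encode (a, n)) = Some 0) else None)"

inductive partrec :: "(nat \<Rightarrow> nat option) \<Rightarrow> bool" where
  zero: "partrec (\<lambda>n. Some 0)"
| succ: "partrec (\<lambda>n. Some (Suc n))"
| left: "partrec (\<lambda>n. Some (fst (prod_decode n)))"
| right: "partrec (\<lambda>n. Some (snd (prod_decode n)))"
| pair: "partrec f \<Longrightarrow> partrec g \<Longrightarrow>
    partrec (\<lambda>n. case f n of None \<Rightarrow> None
                 | Some a \<Rightarrow> (case g n of None \<Rightarrow> None | Some b \<Rightarrow> Some (prod_encode (a, b))))"
| comp: "partrec f \<Longrightarrow> partrec g \<Longrightarrow>
    partrec (\<lambda>n. case g n of None \<Rightarrow> None | Some m \<Rightarrow> f m)"
| prec: "partrec f \<Longrightarrow> partrec g \<Longrightarrow>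
    partrec (\<lambda>p. rec_nat (f (fst (prod_decode p)))
                  (\<lambda>y IH. case IH of None \<Rightarrow> None
                     | Some i \<Rightarrow> g (prod_encode (fst (prod_decode p), prod_encode (y, i))))
                  (snd (prod_decode p)))"
| rfind: "partrec f \<Longrightarrow> partrec (rfind f)"

definition recursive_nat :: "(nat \<Rightarrow> nat) \<Rightarrow> bool" where
  "recursive_nat f \<longleftrightarrow> partrec (\<lambda>n. Some (f n))"

definition rat_of_code :: "nat \<Rightarrow> rat" where
  "rat_of_code n = (case prod_decode n of (a, b) \<Rightarrow> Fract (int_decode a) (int b + 1))"

definition sit_code :: "situation \<Rightarrow> nat" where
  "sit_code s = list_encode (map of_bool s)"

definition pair_code :: "('d \<Rightarrow> nat) \<Rightarrow> ('e \<Rightarrow> nat) \<Rightarrow> 'd \<times> 'e \<Rightarrow> nat" where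
  "pair_code enc1 enc2 p = prod_encode (enc1 (fst p), enc2 (snd p))"

definition bool_code :: "bool \<Rightarrow> nat" where
  "bool_code x = of_bool x"

definition recursive_rat :: "('d \<Rightarrow> nat) \<Rightarrow> ('d \<Rightarrow> rat) \<Rightarrow> bool" where
  "recursive_rat enc q \<longleftrightarrow> (\<exists>f. recursive_nat f \<and> (\<forall>d. q d = rat_of_code (f (enc d))))"

definition lower_semicomputable :: "('d \<Rightarrow> nat) \<Rightarrow> ('d \<Rightarrow> real) \<Rightarrow> bool" where
  "lower_semicomputable enc r \<longleftrightarrow>
     (\<exists>q. recursive_rat (pair_code enc id) q \<and> (\<forall>d n. q (d, n) \<le> q (d, Suc n)) \<and>
          (\<forall>d. (\<lambda>n. real_of_rat (q (d, n))) \<longlonglongrightarrow> r d))"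

definition computable_real :: "('d \<Rightarrow> nat) \<Rightarrow> ('d \<Rightarrow> real) \<Rightarrow> bool" where
  "computable_real enc r \<longleftrightarrow>
     (\<exists>q. recursive_rat (pair_code enc id) q \<and>
          (\<forall>d n. \<bar>r d - real_of_rat (q (d, n))\<bar> < 1 / 2 ^ n))"

definition computable_fs :: "(situation \<Rightarrow> real set) \<Rightarrow> bool" where
  "computable_fs \<phi> \<longleftrightarrow> computable_real sit_code (lower_fs \<phi>) \<and> computable_real sit_code (upper_fs \<phi>)"

definition F_ML :: "(situation \<Rightarrow> real) set" where
  "F_ML = {F. test_process F \<and> lower_semicomputable sit_code F}"

definition F_wML :: "(situation \<Rightarrow> real) set" where
  "F_wML = {F. test_process F \<and> (\<exists>D. multiplier_process D \<and> generated_by D F \<and>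
                 lower_semicomputable (pair_code sit_code bool_code) (\<lambda>(s, x). D s x))}"

(* F_C = F_S *)
definition F_C :: "(situation \<Rightarrow> real) set" where
  "F_C = {F. test_process F \<and> (\<forall>s. 0 < F s) \<and>
            (\<exists>q. recursive_rat sit_code q \<and> (\<forall>s. F s = real_of_rat (q s)))}"

definition real_growth_function :: "(nat \<Rightarrow> real) \<Rightarrow> bool" where
  "real_growth_function \<tau> \<longleftrightarrow> computable_real id \<tau> \<and> mono \<tau> \<and> (\<forall>n. 0 \<le> \<tau> n)
      \<and> \<not> bdd_above (range \<tau>)"

datatype rtype = R_ML | R_wML | R_C | R_S

definition unbounded_along :: "(situation \<Rightarrow> real) \<Rightarrow> path \<Rightarrow> bool" where
  "unbounded_along T \<omega> \<longleftrightarrow> limsup (\<lambda>n. ereal (T (prefix \<omega> n))) = \<infinity>"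

fun random :: "rtype \<Rightarrow> (situation \<Rightarrow> real set) \<Rightarrow> path \<Rightarrow> bool" where
  "random R_ML \<phi> \<omega> \<longleftrightarrow> \<not> (\<exists>T\<in>F_ML. test_supermartingale \<phi> T \<and> unbounded_along T \<omega>)"
| "random R_wML \<phi> \<omega> \<longleftrightarrow> \<not> (\<exists>T\<in>F_wML. test_supermartingale \<phi> T \<and> unbounded_along T \<omega>)"
| "random R_C \<phi> \<omega> \<longleftrightarrow> \<not> (\<exists>T\<in>F_C. test_supermartingale \<phi> T \<and> unbounded_along T \<omega>)"
| "random R_S \<phi> \<omega> \<longleftrightarrow> \<not> (\<exists>T\<in>F_C. \<exists>\<tau>. test_supermartingale \<phi> T \<and> real_growth_function \<tau> \<and>
        limsup (\<lambda>n. ereal (T (prefix \<omega> n) - \<tau> n)) \<ge> 0)"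

end

theory Submission
  imports Defs
begin
abbreviation "pd \<equiv> prod_decode"
abbreviation "pe \<equiv> prod_encode"

lemma rn_zero: "recursive_nat (\<lambda>n. 0)"
  unfolding recursive_nat_def by (rule partrec.zero)

lemma rn_Suc0: "recursive_nat Suc"
  unfolding recursive_nat_def by (rule partrec.succ)

lemma rn_left: "recursive_nat (\<lambda>n. fst (pd n))"
  unfolding recursive_nat_def by (rule partrec.left)

lemma rn_right: "recursive_nat (\<lambda>n. snd (pd n))"
  unfolding recursive_nat_def by (rule partrec.right)

lemma rn_pair: "recursive_nat f \<Longrightarrow> recursive_nat g \<Longrightarrow> recursive_nat (\<lambda>n. pe (f n, g n))"
  unfolding recursive_nat_def using partrec.pair[of "\<lambda>n. Some (f n)" "\<lambda>n. Some (g n)"] by simp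

lemma rn_comp: "recursive_nat f \<Longrightarrow> recursive_nat g \<Longrightarrow> recursive_nat (\<lambda>n. f (g n))"
  unfolding recursive_nat_def using partrec.comp[of "\<lambda>n. Some (f n)" "\<lambda>n. Some (g n)"] by simp

lemma rec_nat_Some:
  "rec_nat (Some a) (\<lambda>y IH. case IH of None \<Rightarrow> None | Some i \<Rightarrow> Some (h y i)) n = Some (rec_nat a h n)"
  by (induction n) auto

lemma rn_prec0:
  assumes "recursive_nat a" "recursive_nat g"
  shows "recursive_nat (\<lambda>p. rec_nat (a (fst (pd p))) (\<lambda>y i. g (pe (fst (pd p), pe (y, i)))) (snd (pd p)))"
  using assms unfolding recursive_nat_def
  using partrec.prec[of "\<lambda>n. Some (a n)" "\<lambda>n. Some (g n)"]
  by (simp add: rec_nat_Some[where h="\<lambda>y i. g (pe (_, pe (y, i)))"])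

lemma rn_id: "recursive_nat (\<lambda>n. n)"
  using rn_pair[OF rn_left rn_right] by simp

lemma rn_const: "recursive_nat (\<lambda>n. k)"
proof (induction k)
  case 0 then show ?case by (rule rn_zero)
next
  case (Suc k) then show ?case using rn_comp[OF rn_Suc0 Suc] by simp
qed

lemma rn_fst: "recursive_nat f \<Longrightarrow> recursive_nat (\<lambda>n. fst (pd (f n)))"
  using rn_comp[OF rn_left] by blast
lemma rn_snd: "recursive_nat f \<Longrightarrow> recursive_nat (\<lambda>n. snd (pd (f n)))"
  using rn_comp[OF rn_right] by blast
lemma rn_Suc: "recursive_nat f \<Longrightarrow> recursive_nat (\<lambda>n. Suc (f n))"
  using rn_comp[OF rn_Suc0] by blast

lemma rec_nat_funpow: "rec_nat x (\<lambda>y i. h i) n = (h ^^ n) x"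
  by (induction n) auto

lemma rn_iter0:
  assumes "recursive_nat h"
  shows "recursive_nat (\<lambda>p. (h ^^ snd (pd p)) (fst (pd p)))"
proof -
  have "recursive_nat (\<lambda>q. h (snd (pd (snd (pd q)))))"
    by (rule rn_comp[OF assms rn_snd[OF rn_right]])
  from rn_prec0[OF rn_id this] show ?thesis by (simp add: rec_nat_funpow)
qed

lemma rn_iter:
  assumes "recursive_nat h" "recursive_nat u" "recursive_nat v"
  shows "recursive_nat (\<lambda>n. (h ^^ v n) (u n))"
  using rn_comp[OF rn_iter0[OF assms(1)] rn_pair[OF assms(2,3)]] by simp

lemma funpow_Suc_add: "(Suc ^^ b) a = a + b"
  by (induction b) auto

lemma rn_add: "recursive_nat f \<Longrightarrow> recursive_nat g \<Longrightarrow> recursive_nat (\<lambda>n. f n + g n)"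
  using rn_iter[OF rn_Suc0, of f g, unfolded funpow_Suc_add] by simp

lemma rec_pred: "rec_nat 0 (\<lambda>y i. y) n = n - 1"
  by (cases n) auto

lemma rn_pred0: "recursive_nat (\<lambda>n. n - 1)"
proof -
  have "recursive_nat (\<lambda>p. rec_nat ((\<lambda>n. 0) (fst (pd p))) (\<lambda>y i. fst (pd (snd (pd (pe (fst (pd p), pe (y, i))))))) (snd (pd p)))"
    by (rule rn_prec0[OF rn_zero rn_fst[OF rn_right]])
  then have "recursive_nat (\<lambda>p. snd (pd p) - 1)" by (simp add: rec_pred)
  from rn_comp[OF this rn_pair[OF rn_zero rn_id]] show ?thesis by simp
qed

lemma funpow_pred_sub: "((\<lambda>n. n - 1) ^^ b) a = a - b"
  by (induction b) auto

lemma rn_sub: "recursive_nat f \<Longrightarrow> recursive_nat g \<Longrightarrow> recursive_nat (\<lambda>n. f n - g n)"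
  using rn_iter[OF rn_pred0, of f g, unfolded funpow_pred_sub] by simp

lemma funpow_mult: "((\<lambda>s. pe (fst (pd s), fst (pd s) + snd (pd s))) ^^ b) (pe (a, c)) = pe (a, c + a * b)"
  by (induction b) auto

lemma rn_mult: "recursive_nat f \<Longrightarrow> recursive_nat g \<Longrightarrow> recursive_nat (\<lambda>n. f n * g n)"
proof -
  assume f: "recursive_nat f" and g: "recursive_nat g"
  have h: "recursive_nat (\<lambda>s. pe (fst (pd s), fst (pd s) + snd (pd s)))"
    by (intro rn_pair rn_add rn_left rn_right)
  have "recursive_nat (\<lambda>n. snd (pd (((\<lambda>s. pe (fst (pd s), fst (pd s) + snd (pd s))) ^^ g n) (pe (f n, 0)))))"
    by (intro rn_snd rn_iter[OF h] rn_pair f g rn_zero)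
  then show ?thesis by (simp add: funpow_mult)
qed

lemma rn_if: "recursive_nat c \<Longrightarrow> recursive_nat f \<Longrightarrow> recursive_nat g \<Longrightarrow>
   recursive_nat (\<lambda>n. if c n = 0 then f n else g n)"
proof -
  assume c: "recursive_nat c" and f: "recursive_nat f" and g: "recursive_nat g"
  have "recursive_nat (\<lambda>n. f n * (1 - c n) + g n * (1 - (1 - c n)))"
    by (intro rn_add rn_mult rn_sub rn_const c f g)
  moreover have "(\<lambda>n. f n * (1 - c n) + g n * (1 - (1 - c n))) = (\<lambda>n. if c n = 0 then f n else g n)"
    by (rule ext) auto
  ultimately show ?thesis by simp
qed

lemma funpow_par: "((\<lambda>a. 1 - a) ^^ n) 0 = n mod 2"
  by (induction n) (auto simp: mod_Suc)

lemma rn_mod2: "recursive_nat f \<Longrightarrow> recursive_nat (\<lambda>n. f n mod 2)"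
proof -
  assume f: "recursive_nat f"
  have "recursive_nat (\<lambda>n. ((\<lambda>a. 1 - a) ^^ f n) 0)"
    by (intro rn_iter rn_sub rn_const rn_id f)
  then show ?thesis unfolding funpow_par .
qed

lemmas rn_intros = rn_id rn_const rn_fst rn_snd rn_Suc rn_pair rn_add rn_sub rn_mult rn_if rn_mod2

definition hdc :: "nat \<Rightarrow> nat" where "hdc c = fst (pd (c - 1))"
definition tlc :: "nat \<Rightarrow> nat" where "tlc c = snd (pd (c - 1))"

lemma hdc_enc[simp]: "hdc (list_encode (x # xs)) = x" by (simp add: hdc_def)
lemma tlc_enc[simp]: "tlc (list_encode (x # xs)) = list_encode xs" by (simp add: tlc_def)

lemma rn_hdc: "recursive_nat f \<Longrightarrow> recursive_nat (\<lambda>n. hdc (f n))"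
  unfolding hdc_def by (intro rn_intros)
lemma rn_tlc: "recursive_nat f \<Longrightarrow> recursive_nat (\<lambda>n. tlc (f n))"
  unfolding tlc_def by (intro rn_intros)

lemma list_encode_ge_length: "length xs \<le> list_encode xs"
proof (induction xs)
  case (Cons x xs) then show ?case using le_prod_encode_2[of "list_encode xs" x] by simp
qed simp

lemma list_encode_0_iff: "list_encode xs = 0 \<longleftrightarrow> xs = []"
  by (cases xs) auto

definition rev_step :: "nat \<Rightarrow> nat" where
  "rev_step st = (if fst (pd st) = 0 then st else pe (tlc (fst (pd st)), Suc (pe (hdc (fst (pd st)), snd (pd st)))))"

lemma rn_rev_step: "recursive_nat rev_step"
  unfolding rev_step_def by (intro rn_intros rn_hdc rn_tlc)

lemma rev_iter: "(rev_step ^^ k) (pe (list_encode ys, list_encode zs)) =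
   pe (list_encode (drop k ys), list_encode (rev (take k ys) @ zs))"
proof (induction k)
  case 0 then show ?case by simp
next
  case (Suc k)
  show ?case
  proof (cases "k < length ys")
    case True
    have d: "drop k ys = ys ! k # drop (Suc k) ys" using True by (simp add: Cons_nth_drop_Suc)
    have t: "take (Suc k) ys = take k ys @ [ys ! k]" using True by (simp add: take_Suc_conv_app_nth)
    show ?thesis using Suc.IH by (simp add: rev_step_def d t del: list_encode.simps) (simp add: d)
  next
    case False
    then show ?thesis using Suc.IH by (simp add: rev_step_def)
  qed
qed

definition rev_c :: "nat \<Rightarrow> nat" where
  "rev_c c = snd (pd ((rev_step ^^ c) (pe (c, 0))))"

lemma rev_c_enc[simp]: "rev_c (list_encode ys) = list_encode (rev ys)"
  using rev_iter[of "list_encode ys" ys "[]"] list_encode_ge_length[of ys]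
  by (simp add: rev_c_def)

lemma rn_rev_c: "recursive_nat f \<Longrightarrow> recursive_nat (\<lambda>n. rev_c (f n))"
  unfolding rev_c_def by (intro rn_intros rn_iter[OF rn_rev_step])

definition snoc_c :: "nat \<Rightarrow> nat \<Rightarrow> nat" where
  "snoc_c c x = rev_c (Suc (pe (x, rev_c c)))"

lemma snoc_c_enc[simp]: "snoc_c (list_encode ys) x = list_encode (ys @ [x])"
proof -
  have "Suc (pe (x, list_encode (rev ys))) = list_encode (x # rev ys)" by simp
  then show ?thesis unfolding snoc_c_def by (simp del: list_encode.simps)
qed

lemma rn_snoc_c: "recursive_nat f \<Longrightarrow> recursive_nat g \<Longrightarrow> recursive_nat (\<lambda>n. snoc_c (f n) (g n))"
  unfolding snoc_c_def by (intro rn_intros rn_rev_c)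

definition fac :: "(nat \<Rightarrow> nat) \<Rightarrow> nat \<Rightarrow> nat \<Rightarrow> nat" where
  "fac G pre x = (if G pre = 0 then (if x = 0 then 6 else 2) else (if x = 0 then 2 else 6))"

definition T_step :: "(nat \<Rightarrow> nat) \<Rightarrow> nat \<Rightarrow> nat" where
  "T_step G st = (if fst (pd st) = 0 then st else
     pe (tlc (fst (pd st)), pe (snoc_c (fst (pd (snd (pd st)))) (hdc (fst (pd st))),
       pe (fst (pd (snd (pd (snd (pd st))))) * fac G (fst (pd (snd (pd st)))) (hdc (fst (pd st))),
           snd (pd (snd (pd (snd (pd st))))) * 5))))"

definition TF :: "(nat \<Rightarrow> nat) \<Rightarrow> nat \<Rightarrow> nat" where
  "TF G c = pe (2 * fst (pd (snd (pd (snd (pd ((T_step G ^^ c) (pe (c, pe (0, pe (1, 1)))))))))),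
               snd (pd (snd (pd (snd (pd ((T_step G ^^ c) (pe (c, pe (0, pe (1, 1)))))))))) - 1)"

lemma rn_fac: "recursive_nat G \<Longrightarrow> recursive_nat f \<Longrightarrow> recursive_nat g \<Longrightarrow> recursive_nat (\<lambda>n. fac G (f n) (g n))"
proof -
  assume G: "recursive_nat G" and f: "recursive_nat f" and g: "recursive_nat g"
  show ?thesis unfolding fac_def by (intro rn_intros rn_comp[OF G] f g)
qed

lemma rn_T_step: "recursive_nat G \<Longrightarrow> recursive_nat (T_step G)"
  unfolding T_step_def by (intro rn_intros rn_hdc rn_tlc rn_snoc_c rn_fac[of G])

lemma rn_TF: "recursive_nat G \<Longrightarrow> recursive_nat (TF G)"
  unfolding TF_def by (intro rn_intros rn_iter[OF rn_T_step])

definition gG :: "(nat \<Rightarrow> nat) \<Rightarrow> situation \<Rightarrow> bool" where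
  "gG G s \<longleftrightarrow> G (sit_code s) \<noteq> 0"

definition Nf :: "(situation \<Rightarrow> bool) \<Rightarrow> situation \<Rightarrow> nat" where
  "Nf g s = (\<Prod>i<length s. if s ! i = g (take i s) then 6 else 2)"

lemma Nf_snoc: "Nf g (t @ [x]) = Nf g t * (if x = g t then 6 else 2)"
  unfolding Nf_def by (simp add: nth_append)

lemma fac_eq: "fac G (sit_code t) (of_bool x) = (if x = gG G t then 6 else 2)"
  by (cases x) (auto simp: fac_def gG_def)

lemma T_iter: "(T_step G ^^ k) (pe (sit_code s, pe (0, pe (1, 1)))) =
   pe (sit_code (drop k s), pe (sit_code (take k s), pe (Nf (gG G) (take k s), 5 ^ length (take k s))))"
proof (induction k)
  case 0 then show ?case by (simp add: sit_code_def Nf_def)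
next
  case (Suc k)
  show ?case
  proof (cases "k < length s")
    case True
    have d: "drop k s = s ! k # drop (Suc k) s" using True by (simp add: Cons_nth_drop_Suc)
    have t: "take (Suc k) s = take k s @ [s ! k]" using True by (simp add: take_Suc_conv_app_nth)
    have e: "sit_code (drop k s) = list_encode (of_bool (s ! k) # map of_bool (drop (Suc k) s))"
      by (simp add: sit_code_def d del: list_encode.simps)
    have "T_step G (pe (sit_code (drop k s), pe (sit_code (take k s), pe (Nf (gG G) (take k s), 5 ^ length (take k s)))))
      = pe (sit_code (drop (Suc k) s), pe (sit_code (take (Suc k) s), pe (Nf (gG G) (take (Suc k) s), 5 ^ length (take (Suc k) s))))"
      unfolding T_step_def
      apply (simp only: e prod_encode_inverse fst_conv snd_conv hdc_enc tlc_enc)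
      apply (simp add: sit_code_def[symmetric] list_encode_0_iff)
      using True by (simp add: t Nf_snoc fac_def gG_def sit_code_def)
    then show ?thesis using Suc.IH by simp
  next
    case False
    then show ?thesis using Suc.IH by (simp add: T_step_def sit_code_def)
  qed
qed

definition Tr :: "(situation \<Rightarrow> bool) \<Rightarrow> situation \<Rightarrow> rat" where
  "Tr g s = (\<Prod>i<length s. if s ! i = g (take i s) then 6/5 else 2/5)"

lemma Tr_Nf: "Tr g s = of_nat (Nf g s) / 5 ^ length s"
proof -
  have "Tr g s = (\<Prod>i<length s. of_nat (if s ! i = g (take i s) then 6 else 2) / 5)"
    unfolding Tr_def by (rule prod.cong) auto
  also have "\<dots> = of_nat (Nf g s) / 5 ^ length s"
    by (simp add: prod_dividef Nf_def of_nat_prod)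
  finally show ?thesis .
qed

lemma TF_correct: "rat_of_code (TF G (sit_code s)) = Tr (gG G) s"
proof -
  have L: "length s \<le> sit_code s" unfolding sit_code_def using list_encode_ge_length[of "map of_bool s"] by simp
  have "TF G (sit_code s) = pe (2 * Nf (gG G) s, 5 ^ length s - 1)"
    unfolding TF_def T_iter using L by simp
  moreover have "int_decode (2 * n) = int n" for n by (simp add: int_decode_def sum_decode_def)
  ultimately show ?thesis
    by (simp add: rat_of_code_def Tr_Nf Fract_of_int_quotient)
qed

lemma recursive_Tr: "recursive_nat G \<Longrightarrow> recursive_rat sit_code (Tr (gG G))"
  unfolding recursive_rat_def using rn_TF TF_correct by metis

lemma Tr_snoc: "Tr g (s @ [x]) = Tr g s * (if x = g s then 6/5 else 2/5)"
  unfolding Tr_def by (simp add: nth_append)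

lemma Tr_pos: "0 < Tr g s"
  unfolding Tr_def by (intro prod_pos) auto

lemma Tr_nil: "Tr g [] = 1" by (simp add: Tr_def)

primrec pre :: "(situation \<Rightarrow> bool) \<Rightarrow> nat \<Rightarrow> situation" where
  "pre g 0 = []"
| "pre g (Suc n) = pre g n @ [g (pre g n)]"

lemma length_pre[simp]: "length (pre g n) = n" by (induction n) auto

lemma prefix_pre: "prefix (\<lambda>n. g (pre g n)) n = pre g n"
proof (induction n)
  case 0 then show ?case by (simp add: prefix_def)
next
  case (Suc n)
  have "prefix (\<lambda>n. g (pre g n)) (Suc n) = prefix (\<lambda>n. g (pre g n)) n @ [g (pre g n)]"
    by (simp add: prefix_def)
  then show ?case using Suc by simp
qed

lemma Tr_pre: "Tr g (pre g n) = (6/5) ^ n"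
  by (induction n) (simp_all add: Tr_nil Tr_snoc)

lemma upperE_single[simp]: "upperE {r} f = E r f" by (simp add: upperE_def)

lemma pow_ge: "1 + real n / 5 \<le> (6/5 :: real) ^ n"
  using Bernoulli_inequality[of "1/5 :: real" n] by simp

lemma tau_growth: "real_growth_function (\<lambda>n. real n / 5)"
proof -
  have c: "computable_real id (\<lambda>n. real n / 5)"
    unfolding computable_real_def
  proof (intro exI conjI allI)
    let ?q = "\<lambda>(d::nat, m::nat). Fract (int d) 5"
    have r: "recursive_nat (\<lambda>k. pe (2 * fst (pd k), 4))" by (intro rn_intros)
    have "int_decode (2 * n) = int n" for n by (simp add: int_decode_def sum_decode_def)
    then have "\<forall>d. ?q d = rat_of_code ((\<lambda>k. pe (2 * fst (pd k), 4)) (pair_code id id d))"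
      by (auto simp: rat_of_code_def pair_code_def)
    with r show "recursive_rat (pair_code id id) ?q" unfolding recursive_rat_def by blast
    fix d n :: nat
    have fe: "Fract (int d) 5 = of_nat d / 5" by (simp add: Fract_of_int_quotient)
    have "real_of_rat (?q (d, n)) = real d / 5" unfolding fe case_prod_conv of_rat_divide of_rat_of_nat_eq by simp
    then show "\<bar>real d / 5 - real_of_rat (?q (d, n))\<bar> < 1 / 2 ^ n" by (simp only:) simp
  qed
  have m: "mono (\<lambda>n. real n / 5)" by (auto simp: mono_def divide_right_mono)
  have u: "\<not> bdd_above (range (\<lambda>n. real n / 5))"
  proof
    assume "bdd_above (range (\<lambda>n. real n / 5))"
    then obtain M where M: "\<And>n. real n / 5 \<le> M" by (auto simp: bdd_above_def)
    obtain n where "5 * M < real n" using reals_Archimedean2 by blast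
    with M[of n] show False by simp
  qed
  show ?thesis unfolding real_growth_function_def using c m u by auto
qed

lemma not_random_from_G:
  fixes \<phi> :: "situation \<Rightarrow> real set" and p :: "situation \<Rightarrow> real" and G :: "nat \<Rightarrow> nat"
  assumes phi: "\<And>s. \<phi> s = {p s}"
    and G: "recursive_nat G"
    and up: "\<And>s. gG G s \<Longrightarrow> p s \<le> 3/4"
    and lo: "\<And>s. \<not> gG G s \<Longrightarrow> 1/4 \<le> p s"
  shows "\<exists>\<omega>. \<not> random R \<phi> \<omega>"
proof -
  define g where "g = gG G"
  define T where "T = (\<lambda>s. real_of_rat (Tr g s))"
  define \<omega> where "\<omega> = (\<lambda>n. g (pre g n))"
  have Tsnoc: "T (s @ [x]) = T s * (if x = g s then 6/5 else 2/5)" for s x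
    unfolding T_def Tr_snoc by (simp add: of_rat_mult of_rat_divide)
  have Tpos: "0 < T s" for s unfolding T_def using Tr_pos by simp
  have tp: "test_process T" unfolding test_process_def T_def using Tr_pos Tr_nil
    by (simp add: less_imp_le)
  have sm: "supermartingale \<phi> T"
    unfolding supermartingale_def
  proof
    fix s
    have "E (p s) (Delta T s) = T s * (p s * ((if True = g s then 6/5 else 2/5) - 1) + (1 - p s) * ((if False = g s then 6/5 else 2/5) - 1))"
      unfolding E_def Delta_def Tsnoc by (simp add: algebra_simps)
    also have "\<dots> \<le> 0"
    proof (rule mult_nonneg_nonpos)
      show "0 \<le> T s" using Tpos[of s] by simp
      show "p s * ((if True = g s then 6/5 else 2/5) - 1) + (1 - p s) * ((if False = g s then 6/5 else 2/5) - 1) \<le> (0::real)"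
        using up[of s] lo[of s] unfolding g_def by (cases "gG G s") auto
    qed
    finally show "upperE (\<phi> s) (Delta T s) \<le> 0" by (simp add: phi)
  qed
  have tsm: "test_supermartingale \<phi> T" unfolding test_supermartingale_def using tp sm by simp
  have Tpath: "T (prefix \<omega> n) = (6/5) ^ n" for n
    unfolding \<omega>_def prefix_pre T_def Tr_pre by (simp add: of_rat_power of_rat_divide)
  have FC: "T \<in> F_C"
    unfolding F_C_def using tp Tpos recursive_Tr[OF G] unfolding T_def g_def by blast
  have FML: "T \<in> F_ML"
  proof -
    have "recursive_rat (pair_code sit_code id) (\<lambda>(s, n). Tr g s)"
    proof -
      obtain f where f: "recursive_nat f" "\<And>s. Tr g s = rat_of_code (f (sit_code s))"
        using recursive_Tr[OF G] unfolding recursive_rat_def g_def by blast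
      have "recursive_nat (\<lambda>k. f (fst (pd k)))" by (rule rn_comp[OF f(1) rn_left])
      then show ?thesis unfolding recursive_rat_def pair_code_def using f(2) by auto
    qed
    then have "lower_semicomputable sit_code T"
      unfolding lower_semicomputable_def T_def by (intro exI[of _ "\<lambda>(s, n). Tr g s"]) auto
    then show ?thesis unfolding F_ML_def using tp by simp
  qed
  have FwML: "T \<in> F_wML"
  proof -
    define D where "D = (\<lambda>s x. if x = g s then 6/5 else (2/5 :: real))"
    have mp: "multiplier_process D" unfolding multiplier_process_def D_def by simp
    have gb: "generated_by D T" unfolding generated_by_def D_def
      using Tsnoc by (simp add: T_def Tr_nil)
    define q where "q = (\<lambda>((s, x), n::nat). if x = g s then 6/5 else (2/5 :: rat))"
    have r: "recursive_nat (\<lambda>k. pe (2 * fac G (fst (pd (fst (pd k)))) (snd (pd (fst (pd k)))), 4))"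
      by (intro rn_intros rn_fac[OF G])
    have "int_decode (2 * n) = int n" for n by (simp add: int_decode_def sum_decode_def)
    then have "\<forall>d. q d = rat_of_code ((\<lambda>k. pe (2 * fac G (fst (pd (fst (pd k)))) (snd (pd (fst (pd k)))), 4))
         (pair_code (pair_code sit_code bool_code) id d))"
      by (auto simp: rat_of_code_def pair_code_def q_def bool_code_def fac_def g_def gG_def Fract_of_int_quotient)
    with r have rr: "recursive_rat (pair_code (pair_code sit_code bool_code) id) q"
      unfolding recursive_rat_def by blast
    have "lower_semicomputable (pair_code sit_code bool_code) (\<lambda>(s, x). D s x)"
      unfolding lower_semicomputable_def
      by (intro exI[of _ q] conjI rr) (auto simp: q_def D_def of_rat_divide)
    then show ?thesis unfolding F_wML_def using tp mp gb by blast
  qed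
  have unb: "unbounded_along T \<omega>"
    unfolding unbounded_along_def
  proof (rule ereal_top)
    fix B :: real
    obtain N :: nat where N: "5 * B < real N" using reals_Archimedean2 by blast
    have "eventually (\<lambda>n. ereal B \<le> ereal (T (prefix \<omega> n))) sequentially"
      unfolding eventually_sequentially
    proof (intro exI allI impI)
      fix n assume "N \<le> n"
      then have "B \<le> 1 + real n / 5" using N by simp
      also have "\<dots> \<le> T (prefix \<omega> n)" unfolding Tpath by (rule pow_ge)
      finally show "ereal B \<le> ereal (T (prefix \<omega> n))" by simp
    qed
    then have "ereal B \<le> liminf (\<lambda>n. ereal (T (prefix \<omega> n)))" by (rule Liminf_bounded)
    also have "\<dots> \<le> limsup (\<lambda>n. ereal (T (prefix \<omega> n)))" by (rule Liminf_le_Limsup) simp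
    finally show "ereal B \<le> limsup (\<lambda>n. ereal (T (prefix \<omega> n)))" .
  qed
  have S: "limsup (\<lambda>n. ereal (T (prefix \<omega> n) - real n / 5)) \<ge> 0"
  proof -
    have h: "0 \<le> T (prefix \<omega> n) - real n / 5" for n using pow_ge[of n] unfolding Tpath by linarith
    have "eventually (\<lambda>n. 0 \<le> ereal (T (prefix \<omega> n) - real n / 5)) sequentially"
      using h by (intro always_eventually allI) simp
    then have "0 \<le> liminf (\<lambda>n. ereal (T (prefix \<omega> n) - real n / 5))" by (rule Liminf_bounded)
    also have "\<dots> \<le> limsup (\<lambda>n. ereal (T (prefix \<omega> n) - real n / 5))" by (rule Liminf_le_Limsup) simp
    finally show ?thesis .
  qed
  show ?thesis
  proof (cases R)
    case R_ML then show ?thesis using FML tsm unb by auto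
  next
    case R_wML then show ?thesis using FwML tsm unb by auto
  next
    case R_C then show ?thesis using FC tsm unb by auto
  next
    case R_S then show ?thesis using FC tsm S tau_growth by auto
  qed
qed

datatype pc = PZ | PS | PL | PR | PP pc pc | PC pc pc | PPr pc pc | PF pc

instance pc :: countable by countable_datatype

fun ev :: "pc \<Rightarrow> nat \<Rightarrow> nat option" where
  "ev PZ = (\<lambda>n. Some 0)"
| "ev PS = (\<lambda>n. Some (Suc n))"
| "ev PL = (\<lambda>n. Some (fst (prod_decode n)))"
| "ev PR = (\<lambda>n. Some (snd (prod_decode n)))"
| "ev (PP c d) = (\<lambda>n. case ev c n of None \<Rightarrow> None
                 | Some a \<Rightarrow> (case ev d n of None \<Rightarrow> None | Some b \<Rightarrow> Some (prod_encode (a, b))))"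
| "ev (PC c d) = (\<lambda>n. case ev d n of None \<Rightarrow> None | Some m \<Rightarrow> ev c m)"
| "ev (PPr c d) = (\<lambda>p. rec_nat (ev c (fst (prod_decode p)))
                  (\<lambda>y IH. case IH of None \<Rightarrow> None
                     | Some i \<Rightarrow> ev d (prod_encode (fst (prod_decode p), prod_encode (y, i))))
                  (snd (prod_decode p)))"
| "ev (PF c) = rfind (ev c)"

lemma partrec_ev: "partrec f \<Longrightarrow> \<exists>c. f = ev c"
proof (induction rule: partrec.induct)
  case zero show ?case by (rule exI[of _ PZ]) simp
next
  case succ show ?case by (rule exI[of _ PS]) simp
next
  case left show ?case by (rule exI[of _ PL]) simp
next
  case right show ?case by (rule exI[of _ PR]) simp
next
  case (pair f g)
  then obtain c d where e: "f = ev c" "g = ev d" by blast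
  show ?case unfolding e by (intro exI[of _ "PP c d"]) simp
next
  case (comp f g)
  then obtain c d where e: "f = ev c" "g = ev d" by blast
  show ?case unfolding e by (intro exI[of _ "PC c d"]) simp
next
  case (prec f g)
  then obtain c d where e: "f = ev c" "g = ev d" by blast
  show ?case unfolding e by (intro exI[of _ "PPr c d"]) simp
next
  case (rfind f)
  then obtain c where e: "f = ev c" by blast
  show ?case unfolding e by (intro exI[of _ "PF c"]) simp
qed

lemma countable_partrec: "countable {f. partrec f}"
proof -
  have "{f. partrec f} \<subseteq> range ev" using partrec_ev by blast
  then show ?thesis by (rule countable_subset) simp
qed

lemma countable_rn: "countable {f. recursive_nat f}"
proof -
  have "{f. recursive_nat f} \<subseteq> (\<lambda>g n. the (g n)) ` {f. partrec f}"
  proof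
    fix f assume "f \<in> {f. recursive_nat f}"
    then have "partrec (\<lambda>n. Some (f n))" by (simp add: recursive_nat_def)
    then show "f \<in> (\<lambda>g n. the (g n)) ` {f. partrec f}" by (intro image_eqI[where x="\<lambda>n. Some (f n)"]) auto
  qed
  then show ?thesis by (rule countable_subset) (intro countable_image countable_partrec)
qed

lemma countable_rr: "countable {q. recursive_rat enc q}"
proof -
  have "{q. recursive_rat enc q} \<subseteq> (\<lambda>f d. rat_of_code (f (enc d))) ` {f. recursive_nat f}"
    unfolding recursive_rat_def by auto
  then show ?thesis by (rule countable_subset) (intro countable_image countable_rn)
qed

definition genF :: "(situation \<Rightarrow> bool \<Rightarrow> real) \<Rightarrow> situation \<Rightarrow> real" where
  "genF D s = (\<Prod>i<length s. D (take i s) (s ! i))"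

lemma generated_genF: "generated_by D F \<Longrightarrow> F = genF D"
proof
  fix s assume g: "generated_by D F"
  show "F s = genF D s"
  proof (induction s rule: rev_induct)
    case Nil then show ?case using g by (simp add: generated_by_def genF_def)
  next
    case (snoc x xs)
    have "genF D (xs @ [x]) = genF D xs * D xs x" by (simp add: genF_def nth_append)
    then show ?case using g snoc by (simp add: generated_by_def)
  qed
qed

definition Fam :: "(situation \<Rightarrow> real) set" where "Fam = F_ML \<union> F_wML \<union> F_C"

lemma countable_Fam: "countable Fam"
proof -
  have a: "F_C \<subseteq> (\<lambda>q s. real_of_rat (q s)) ` {q. recursive_rat sit_code q}"
    unfolding F_C_def by auto
  have b: "F_ML \<subseteq> (\<lambda>q s. lim (\<lambda>n. real_of_rat (q (s, n)))) ` {q. recursive_rat (pair_code sit_code id) q}"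
  proof
    fix F assume "F \<in> F_ML"
    then have "lower_semicomputable sit_code F" by (simp add: F_ML_def)
    then obtain q where q: "recursive_rat (pair_code sit_code id) q" "\<And>d. (\<lambda>n. real_of_rat (q (d, n))) \<longlonglongrightarrow> F d"
      unfolding lower_semicomputable_def by blast
    have "F = (\<lambda>s. lim (\<lambda>n. real_of_rat (q (s, n))))"
    proof (rule ext)
      fix s show "F s = lim (\<lambda>n. real_of_rat (q (s, n)))" using limI[OF q(2)[of s]] by simp
    qed
    with q(1) show "F \<in> (\<lambda>q s. lim (\<lambda>n. real_of_rat (q (s, n)))) ` {q. recursive_rat (pair_code sit_code id) q}"
      by blast
  qed
  have c: "F_wML \<subseteq> (\<lambda>q. genF (\<lambda>s x. lim (\<lambda>n. real_of_rat (q ((s, x), n))))) `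
      {q. recursive_rat (pair_code (pair_code sit_code bool_code) id) q}"
  proof
    fix F assume "F \<in> F_wML"
    then have "\<exists>D. generated_by D F \<and> lower_semicomputable (pair_code sit_code bool_code) (\<lambda>(s, x). D s x)"
      by (auto simp: F_wML_def)
    then obtain D where D: "generated_by D F" and ls: "lower_semicomputable (pair_code sit_code bool_code) (\<lambda>(s, x). D s x)"
      by blast
    from ls obtain q where q: "recursive_rat (pair_code (pair_code sit_code bool_code) id) q"
      "\<And>d. (\<lambda>n. real_of_rat (q (d, n))) \<longlonglongrightarrow> (\<lambda>(s, x). D s x) d"
      unfolding lower_semicomputable_def by blast
    have "D = (\<lambda>s x. lim (\<lambda>n. real_of_rat (q ((s, x), n))))"
    proof (intro ext)
      fix s x show "D s x = lim (\<lambda>n. real_of_rat (q ((s, x), n)))"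
        using limI[OF q(2)[of "(s, x)"]] by simp
    qed
    with generated_genF[OF D] q(1) show "F \<in> (\<lambda>q. genF (\<lambda>s x. lim (\<lambda>n. real_of_rat (q ((s, x), n))))) `
      {q. recursive_rat (pair_code (pair_code sit_code bool_code) id) q}" by blast
  qed
  show ?thesis unfolding Fam_def
    using countable_subset[OF a] countable_subset[OF b] countable_subset[OF c]
    by (simp add: countable_rr)
qed

definition TT :: "nat \<Rightarrow> situation \<Rightarrow> real" where "TT k = from_nat_into Fam k"

definition Inc :: "(situation \<Rightarrow> real) \<Rightarrow> situation set" where
  "Inc T = {s. T s < T (s @ [True]) \<or> T s < T (s @ [False])}"

primrec chs :: "nat \<Rightarrow> situation set" where
  "chs 0 = {}"
| "chs (Suc k) = insert (SOME s. s \<in> Inc (TT k) \<and> s \<notin> chs k) (chs k)"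

definition ch :: "nat \<Rightarrow> situation" where "ch k = (SOME s. s \<in> Inc (TT k) \<and> s \<notin> chs k)"

lemma finite_chs: "finite (chs k)" by (induction k) auto

lemma ch_prop: "infinite (Inc (TT k)) \<Longrightarrow> ch k \<in> Inc (TT k) \<and> ch k \<notin> chs k"
proof -
  assume "infinite (Inc (TT k))"
  then have "\<exists>s. s \<in> Inc (TT k) \<and> s \<notin> chs k"
    using finite_chs[of k] by (meson finite_subset subsetI)
  then show ?thesis unfolding ch_def by (rule someI_ex)
qed

lemma ch_in_chs: "j < k \<Longrightarrow> ch j \<in> chs k"
proof (induction k)
  case 0 then show ?case by simp
next
  case (Suc k) then show ?case by (auto simp: ch_def[symmetric] less_Suc_eq)
qed

lemma ch_inj: "infinite (Inc (TT j)) \<Longrightarrow> infinite (Inc (TT k)) \<Longrightarrow> ch j = ch k \<Longrightarrow> j = k"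
  by (metis ch_in_chs ch_prop linorder_neqE_nat)

definition pp :: "situation \<Rightarrow> real" where
  "pp s = (if \<exists>k. infinite (Inc (TT k)) \<and> ch k = s then
     (if TT (SOME k. infinite (Inc (TT k)) \<and> ch k = s) s < TT (SOME k. infinite (Inc (TT k)) \<and> ch k = s) (s @ [True]) then 1 else 0)
    else 1/2)"

definition phi0 :: "situation \<Rightarrow> real set" where "phi0 s = {pp s}"

lemma pp_range: "0 \<le> pp s \<and> pp s \<le> 1" by (simp add: pp_def)

lemma kill:
  assumes "T \<in> Fam" "supermartingale phi0 T"
  shows "finite (Inc T)"
proof (rule ccontr)
  assume inf: "infinite (Inc T)"
  obtain k where k: "TT k = T" unfolding TT_def using from_nat_into_surj[OF countable_Fam assms(1)] by blast
  have infk: "infinite (Inc (TT k))" using inf k by simp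
  define s where "s = ch k"
  have sI: "s \<in> Inc T" using ch_prop[OF infk] k s_def by simp
  have ex: "\<exists>k'. infinite (Inc (TT k')) \<and> ch k' = s" using infk s_def by blast
  have "(SOME k'. infinite (Inc (TT k')) \<and> ch k' = s) = k"
  proof (rule some_equality)
    show "infinite (Inc (TT k)) \<and> ch k = s" using infk s_def by simp
    fix k' assume "infinite (Inc (TT k')) \<and> ch k' = s"
    then show "k' = k" using ch_inj[OF _ infk] s_def by blast
  qed
  then have pps: "pp s = (if T s < T (s @ [True]) then 1 else 0)"
    unfolding pp_def using ex k by simp
  have "upperE (phi0 s) (Delta T s) \<le> 0" using assms(2) unfolding supermartingale_def by blast
  then have "E (pp s) (Delta T s) \<le> 0" by (simp add: phi0_def)
  then show False using sI pps unfolding Inc_def E_def Delta_def by (auto split: if_splits)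
qed

lemma bounded_path:
  assumes tp: "test_process T" and fin: "finite (Inc T)"
  shows "\<exists>B. \<forall>n. T (prefix \<omega> n) \<le> B"
proof -
  define B where "B = 1 + (\<Sum>s\<in>Inc T. T (s @ [True]) + T (s @ [False]))"
  have nn: "0 \<le> T s" for s using tp by (simp add: test_process_def)
  have sn: "0 \<le> (\<Sum>s\<in>Inc T. T (s @ [True]) + T (s @ [False]))" using nn by (simp add: sum_nonneg add_nonneg_nonneg)
  have "T (prefix \<omega> n) \<le> B" for n
  proof (induction n)
    case 0 then show ?case using tp sn by (simp add: prefix_def test_process_def B_def)
  next
    case (Suc n)
    let ?s = "prefix \<omega> n"
    have ps: "prefix \<omega> (Suc n) = ?s @ [\<omega> n]" by (simp add: prefix_def)
    show ?case
    proof (cases "?s \<in> Inc T")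
      case True
      have "T (?s @ [\<omega> n]) \<le> T (?s @ [True]) + T (?s @ [False])" using nn by (cases "\<omega> n") (auto simp: add_increasing add_increasing2)
      also have "\<dots> \<le> (\<Sum>s\<in>Inc T. T (s @ [True]) + T (s @ [False]))"
        by (rule member_le_sum[OF True _ fin]) (simp add: nn add_nonneg_nonneg)
      finally show ?thesis unfolding ps B_def by simp
    next
      case False
      then have "T (?s @ [\<omega> n]) \<le> T ?s" unfolding Inc_def by (cases "\<omega> n") auto
      then show ?thesis using Suc ps by simp
    qed
  qed
  then show ?thesis by blast
qed

lemma fam_safe:
  assumes "T \<in> Fam" "test_supermartingale phi0 T"
  shows "\<not> unbounded_along T \<omega>" and "\<And>\<tau>. real_growth_function \<tau> \<Longrightarrow> \<not> limsup (\<lambda>n. ereal (T (prefix \<omega> n) - \<tau> n)) \<ge> 0"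
proof -
  have tp: "test_process T" and sm: "supermartingale phi0 T" using assms(2) by (auto simp: test_supermartingale_def)
  obtain B where B: "\<And>n. T (prefix \<omega> n) \<le> B" using bounded_path[OF tp kill[OF assms(1) sm]] by blast
  have "limsup (\<lambda>n. ereal (T (prefix \<omega> n))) \<le> ereal B"
    by (rule Limsup_bounded) (use B in \<open>auto intro: always_eventually\<close>)
  then show "\<not> unbounded_along T \<omega>" unfolding unbounded_along_def by auto
  fix \<tau> assume "real_growth_function \<tau>"
  then have mono: "mono \<tau>" and ub: "\<not> bdd_above (range \<tau>)" by (auto simp: real_growth_function_def)
  obtain N where N: "B + 1 < \<tau> N" using ub by (metis bdd_aboveI2 not_le rangeI)
  have "eventually (\<lambda>n. ereal (T (prefix \<omega> n) - \<tau> n) \<le> ereal (-1)) sequentially"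
    unfolding eventually_sequentially
  proof (intro exI allI impI)
    fix n assume "N \<le> n"
    then have "\<tau> N \<le> \<tau> n" using mono by (simp add: mono_def)
    then show "ereal (T (prefix \<omega> n) - \<tau> n) \<le> ereal (-1)" using B[of n] N by simp
  qed
  then have "limsup (\<lambda>n. ereal (T (prefix \<omega> n) - \<tau> n)) \<le> ereal (-1)" by (rule Limsup_bounded)
  moreover have "ereal (-1) < 0" by simp
  ultimately have "limsup (\<lambda>n. ereal (T (prefix \<omega> n) - \<tau> n)) < 0" by (rule le_less_trans)
  then show "\<not> limsup (\<lambda>n. ereal (T (prefix \<omega> n) - \<tau> n)) \<ge> 0" by (simp only: not_le)
qed

lemma phi0_random: "random R phi0 \<omega>"
proof -
  have sub: "F_ML \<subseteq> Fam" "F_wML \<subseteq> Fam" "F_C \<subseteq> Fam" unfolding Fam_def by blast+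
  have A: "\<And>T. T \<in> Fam \<Longrightarrow> test_supermartingale phi0 T \<Longrightarrow> \<not> unbounded_along T \<omega>"
    by (rule fam_safe(1))
  have B: "\<And>T \<tau>. T \<in> Fam \<Longrightarrow> test_supermartingale phi0 T \<Longrightarrow> real_growth_function \<tau> \<Longrightarrow>
      \<not> limsup (\<lambda>n. ereal (T (prefix \<omega> n) - \<tau> n)) \<ge> 0"
    by (rule fam_safe(2))
  show ?thesis
  proof (cases R)
    case R_ML
    have "\<not> (\<exists>T\<in>F_ML. test_supermartingale phi0 T \<and> unbounded_along T \<omega>)"
    proof
      assume "\<exists>T\<in>F_ML. test_supermartingale phi0 T \<and> unbounded_along T \<omega>"
      then obtain T where t1: "T \<in> F_ML" and t2: "test_supermartingale phi0 T" and t3: "unbounded_along T \<omega>" by blast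
      show False using A[OF subsetD[OF sub(1) t1] t2] t3 by simp
    qed
    then show ?thesis unfolding R_ML random.simps .
  next
    case R_wML
    have "\<not> (\<exists>T\<in>F_wML. test_supermartingale phi0 T \<and> unbounded_along T \<omega>)"
    proof
      assume "\<exists>T\<in>F_wML. test_supermartingale phi0 T \<and> unbounded_along T \<omega>"
      then obtain T where t1: "T \<in> F_wML" and t2: "test_supermartingale phi0 T" and t3: "unbounded_along T \<omega>" by blast
      show False using A[OF subsetD[OF sub(2) t1] t2] t3 by simp
    qed
    then show ?thesis unfolding R_wML random.simps .
  next
    case R_C
    have "\<not> (\<exists>T\<in>F_C. test_supermartingale phi0 T \<and> unbounded_along T \<omega>)"
    proof
      assume "\<exists>T\<in>F_C. test_supermartingale phi0 T \<and> unbounded_along T \<omega>"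
      then obtain T where t1: "T \<in> F_C" and t2: "test_supermartingale phi0 T" and t3: "unbounded_along T \<omega>" by blast
      show False using A[OF subsetD[OF sub(3) t1] t2] t3 by simp
    qed
    then show ?thesis unfolding R_C random.simps .
  next
    case R_S
    have "\<not> (\<exists>T\<in>F_C. \<exists>\<tau>. test_supermartingale phi0 T \<and> real_growth_function \<tau> \<and>
        limsup (\<lambda>n. ereal (T (prefix \<omega> n) - \<tau> n)) \<ge> 0)"
    proof
      assume "\<exists>T\<in>F_C. \<exists>\<tau>. test_supermartingale phi0 T \<and> real_growth_function \<tau> \<and>
        limsup (\<lambda>n. ereal (T (prefix \<omega> n) - \<tau> n)) \<ge> 0"
      then obtain T \<tau> where "T \<in> F_C" "test_supermartingale phi0 T" "real_growth_function \<tau>"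
        "limsup (\<lambda>n. ereal (T (prefix \<omega> n) - \<tau> n)) \<ge> 0" by blast
      then show False using B[OF subsetD[OF sub(3)]] by blast
    qed
    then show ?thesis unfolding R_S random.simps .
  qed
qed

lemma phi0_fs: "forecasting_system phi0"
  unfolding forecasting_system_def closed_unit_intervals_def phi0_def
proof
  fix s show "{pp s} \<in> {{a..b} |a b. 0 \<le> a \<and> a \<le> b \<and> b \<le> 1}"
    using pp_range[of s] by (intro CollectI exI[of _ "pp s"]) auto
qed

lemma phi0_precise: "precise phi0" by (auto simp: precise_def phi0_def)

lemma int_decode_cases: "int_decode a = (if even a then int (a div 2) else - int (a div 2) - 1)"
  by (simp add: int_decode_def sum_decode_def)

lemma rat_code_le_half:
  "rat_of_code k \<le> 1/2 \<longleftrightarrow> (fst (pd k) mod 2 \<noteq> 0 \<or> fst (pd k) \<le> Suc (snd (pd k)))"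
proof -
  obtain a b where k: "pd k = (a, b)" by (cases "pd k")
  have r: "rat_of_code k = of_int (int_decode a) / (of_nat b + 1)"
    by (simp add: rat_of_code_def k Fract_of_int_quotient)
  have pos: "(0::rat) < of_nat b + 1" by simp
  show ?thesis
  proof (cases "even a")
    case True
    then obtain m where m: "a = 2 * m" by blast
    have "rat_of_code k = of_nat m / (of_nat b + 1)" using r m by (simp add: int_decode_cases)
    also have "\<dots> \<le> 1/2 \<longleftrightarrow> 2 * of_nat m \<le> (of_nat b + 1 :: rat)"
      using pos by (simp add: divide_le_eq field_simps)
    also have "\<dots> \<longleftrightarrow> 2 * m \<le> b + 1"
      by (metis (mono_tags, lifting) of_nat_1 of_nat_add of_nat_le_iff of_nat_mult of_nat_numeral)
    finally show ?thesis using m k by simp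
  next
    case False
    have "rat_of_code k = (- of_nat (a div 2) - 1) / (of_nat b + 1)" using r False by (simp add: int_decode_cases)
    also have "\<dots> \<le> 0" using pos by (intro divide_nonpos_pos) auto
    finally have "rat_of_code k \<le> 1/2" by simp
    moreover have "fst (pd k) mod 2 \<noteq> 0" using False k by (simp add: even_iff_mod_2_eq_zero)
    ultimately show ?thesis by simp
  qed
qed

definition Gc :: "(nat \<Rightarrow> nat) \<Rightarrow> nat \<Rightarrow> nat" where
  "Gc f c = (if fst (pd (f (pe (c, 2)))) mod 2 = 0 then
       (if fst (pd (f (pe (c, 2)))) - Suc (snd (pd (f (pe (c, 2))))) = 0 then 1 else 0) else 1)"

lemma rn_Gc: "recursive_nat f \<Longrightarrow> recursive_nat (Gc f)"
proof -
  assume f: "recursive_nat f"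
  show ?thesis unfolding Gc_def by (intro rn_intros rn_comp[OF f])
qed

lemma Gc_iff: "Gc f c \<noteq> 0 \<longleftrightarrow> rat_of_code (f (pe (c, 2))) \<le> 1/2"
  unfolding rat_code_le_half Gc_def by auto

theorem corollary15:
  fixes R :: rtype
  shows "(\<exists>\<phi>. forecasting_system \<phi> \<and> precise \<phi> \<and> (\<forall>\<omega>. random R \<phi> \<omega>)) \<and>
         (\<forall>\<phi>. forecasting_system \<phi> \<and> precise \<phi> \<and> (\<forall>\<omega>. random R \<phi> \<omega>)
              \<longrightarrow> \<not> stationary \<phi> \<and> \<not> computable_fs \<phi>)"
proof (intro conjI allI impI)
  show "\<exists>\<phi>. forecasting_system \<phi> \<and> precise \<phi> \<and> (\<forall>\<omega>. random R \<phi> \<omega>)"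
    using phi0_fs phi0_precise phi0_random by blast
next
  fix \<phi> :: "situation \<Rightarrow> real set"
  assume H: "forecasting_system \<phi> \<and> precise \<phi> \<and> (\<forall>\<omega>. random R \<phi> \<omega>)"
  define p where "p s = Inf (\<phi> s)" for s
  have phi: "\<phi> s = {p s}" for s
  proof -
    obtain r where "\<phi> s = {r}" using H unfolding precise_def by blast
    then show ?thesis by (simp add: p_def)
  qed
  have rnd: "\<And>\<omega>. random R \<phi> \<omega>" using H by blast
  show "\<not> stationary \<phi>"
  proof
    assume "stationary \<phi>"
    then obtain I where I: "\<And>s. \<phi> s = I" unfolding stationary_def by blast
    have ps: "p s = p []" for s unfolding p_def using I by simp
    show False
    proof (cases "p [] \<le> 3/4")
      case True
      have "\<exists>\<omega>. \<not> random R \<phi> \<omega>"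
      proof (rule not_random_from_G[where G="\<lambda>n. 1" and p=p, OF phi rn_const])
        fix s show "p s \<le> 3/4" using True ps[of s] by simp
      next
        fix s assume "\<not> gG (\<lambda>n. 1) s" then show "1/4 \<le> p s" by (simp add: gG_def)
      qed
      then show False using rnd by blast
    next
      case False
      have "\<exists>\<omega>. \<not> random R \<phi> \<omega>"
      proof (rule not_random_from_G[where G="\<lambda>n. 0" and p=p, OF phi rn_const])
        fix s assume "gG (\<lambda>n. 0) s" then show "p s \<le> 3/4" by (simp add: gG_def)
      next
        fix s show "1/4 \<le> p s" using False ps[of s] by simp
      qed
      then show False using rnd by blast
    qed
  qed
  show "\<not> computable_fs \<phi>"
  proof
    assume "computable_fs \<phi>"
    then have "computable_real sit_code p" unfolding computable_fs_def lower_fs_def p_def by simp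
    then obtain q where q: "recursive_rat (pair_code sit_code id) q"
      and qa: "\<And>d n. \<bar>p d - real_of_rat (q (d, n))\<bar> < 1 / 2 ^ n"
      unfolding computable_real_def by blast
    obtain f where f: "recursive_nat f" and fq: "\<And>d. q d = rat_of_code (f (pair_code sit_code id d))"
      using q unfolding recursive_rat_def by blast
    have gq: "gG (Gc f) s \<longleftrightarrow> q (s, 2) \<le> 1/2" for s
      unfolding gG_def Gc_iff fq pair_code_def by simp
    have half: "real_of_rat (1/2) = 1/2" by (simp add: of_rat_divide)
    have "\<exists>\<omega>. \<not> random R \<phi> \<omega>"
    proof (rule not_random_from_G[where G="Gc f" and p=p, OF phi rn_Gc[OF f]])
      fix s assume "gG (Gc f) s"
      then have "q (s, 2) \<le> 1/2" using gq by blast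
      then have "real_of_rat (q (s, 2)) \<le> 1/2" using of_rat_less_eq half by metis
      moreover have "\<bar>p s - real_of_rat (q (s, 2))\<bar> < 1/4" using qa[of s 2] by simp
      ultimately show "p s \<le> 3/4" by linarith
    next
      fix s assume "\<not> gG (Gc f) s"
      then have "\<not> q (s, 2) \<le> 1/2" using gq by blast
      then have "\<not> real_of_rat (q (s, 2)) \<le> 1/2" using of_rat_less_eq half by metis
      moreover have "\<bar>p s - real_of_rat (q (s, 2))\<bar> < 1/4" using qa[of s 2] by simp
      ultimately show "1/4 \<le> p s" by linarith
    qed
    then show False using rnd by blast
  qed
qed

end
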